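(* Let $G$ be an unweighted graph (all edges have equal weight) that is not a multigraph and is $2$-connected, and let $s, d$ be a source-destination pair. Suppose a forwarding subgraph (FS) uses the shortest path $P(s,d)$ between $s$ and $d$ as the primary path and can avoid any single link failure along the primary path. Then the number of edges in the FS is at least $\left\lceil \dfrac{5|P(s,d)|}{2} \right\rceil$, where $|P(s,d)|$ is the number of edges of $P(s,d)$. Moreover, there exist graphs for which this bound is tight.
   Context: A forwarding subgraph (FS) is a directed acyclic subgraph of the network graph specifying the paths a packet may take from source $s$ to destination $d$. It contains a designated primary path from $s$ to $d$. "Avoiding any single link failure along the primary path" means that for every node $v_i$ on the primary path, the FS contains an alternate path from $v_i$ to $d$ that does not use $v_i$'s outgoing primary-path link. Throughout, the graph is assumed not to be a multigraph and to be $2$-connected. *)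

theory Defs
  imports Complex_Main
begin

definition simple_graph :: "'a set \<Rightarrow> 'a set set \<Rightarrow> bool" where
  "simple_graph V E \<longleftrightarrow> finite V \<and> (\<forall>e\<in>E. e \<subseteq> V \<and> card e = 2)"

text \<open>Undirected path (as a vertex list): nonempty, no repeated vertex, consecutive vertices adjacent.
  Its number of edges is length xs - 1.\<close>
definition upath :: "'a set set \<Rightarrow> 'a list \<Rightarrow> bool" where
  "upath E xs \<longleftrightarrow> xs \<noteq> [] \<and> distinct xs \<and> (\<forall>i < length xs - 1. {xs ! i, xs ! (i + 1)} \<in> E)"

definition graph_connected :: "'a set \<Rightarrow> 'a set set \<Rightarrow> bool" where
  "graph_connected V E \<longleftrightarrow> V \<noteq> {} \<and>
     (\<forall>u\<in>V. \<forall>v\<in>V. \<exists>xs. set xs \<subseteq> V \<and> upath E xs \<and> hd xs = u \<and> last xs = v)"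

definition two_connected :: "'a set \<Rightarrow> 'a set set \<Rightarrow> bool" where
  "two_connected V E \<longleftrightarrow> card V \<ge> 3 \<and> graph_connected V E \<and>
     (\<forall>x\<in>V. graph_connected (V - {x}) {e\<in>E. x \<notin> e})"

definition shortest_path :: "'a set set \<Rightarrow> 'a \<Rightarrow> 'a \<Rightarrow> 'a list \<Rightarrow> bool" where
  "shortest_path E s d P \<longleftrightarrow> upath E P \<and> hd P = s \<and> last P = d \<and>
     (\<forall>Q. upath E Q \<and> hd Q = s \<and> last Q = d \<longrightarrow> length P \<le> length Q)"

definition dpath :: "('a \<times> 'a) set \<Rightarrow> 'a list \<Rightarrow> bool" where
  "dpath F xs \<longleftrightarrow> xs \<noteq> [] \<and> distinct xs \<and> (\<forall>i < length xs - 1. (xs ! i, xs ! (i + 1)) \<in> F)"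

definition uses_arc :: "'a list \<Rightarrow> 'a \<times> 'a \<Rightarrow> bool" where
  "uses_arc xs a \<longleftrightarrow> (\<exists>i < length xs - 1. (xs ! i, xs ! (i + 1)) = a)"

definition forwarding_subgraph ::
  "'a set set \<Rightarrow> 'a \<Rightarrow> 'a \<Rightarrow> 'a list \<Rightarrow> ('a \<times> 'a) set \<Rightarrow> bool" where
  "forwarding_subgraph E s d P F \<longleftrightarrow>
     (\<forall>(u, v)\<in>F. {u, v} \<in> E) \<and> acyclic F \<and>
     P \<noteq> [] \<and> hd P = s \<and> last P = d \<and> dpath F P"

definition avoids_single_link_failures :: "('a \<times> 'a) set \<Rightarrow> 'a \<Rightarrow> 'a list \<Rightarrow> bool" where
  "avoids_single_link_failures F d P \<longleftrightarrow>
     (\<forall>i < length P - 1. \<exists>Q. dpath F Q \<and> hd Q = P ! i \<and> last Q = d \<and>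
        \<not> uses_arc Q (P ! i, P ! (i + 1)))"

definition FS_setting ::
  "'a set \<Rightarrow> 'a set set \<Rightarrow> 'a \<Rightarrow> 'a \<Rightarrow> 'a list \<Rightarrow> ('a \<times> 'a) set \<Rightarrow> bool" where
  "FS_setting V E s d P F \<longleftrightarrow>
     simple_graph V E \<and> two_connected V E \<and> s \<in> V \<and> d \<in> V \<and> s \<noteq> d \<and>
     shortest_path E s d P \<and> forwarding_subgraph E s d P F \<and>
     avoids_single_link_failures F d P"

end

theory Submission
  imports Defs
begin


fun gpath :: "('a \<Rightarrow> 'a \<Rightarrow> bool) \<Rightarrow> 'a list \<Rightarrow> bool" where
  "gpath r [] = True"
| "gpath r [x] = True"
| "gpath r (x # y # zs) = (r x y \<and> x \<notin> set (y # zs) \<and> gpath r (y # zs))"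

lemma gpath_iff: "gpath r xs \<longleftrightarrow> distinct xs \<and> (\<forall>i < length xs - 1. r (xs!i) (xs!(i+1)))"
  by (induction r xs rule: gpath.induct) (auto simp: All_less_Suc2)

lemma upath_gpath: "upath E xs \<longleftrightarrow> xs \<noteq> [] \<and> gpath (\<lambda>a b. {a,b} \<in> E) xs"
  by (simp add: upath_def gpath_iff)

lemma dpath_gpath: "dpath F xs \<longleftrightarrow> xs \<noteq> [] \<and> gpath (\<lambda>a b. (a,b) \<in> F) xs"
  by (simp add: dpath_def gpath_iff)

lemma gpath_Cons: "gpath r (x # ys) \<longleftrightarrow> gpath r ys \<and> x \<notin> set ys \<and> (ys \<noteq> [] \<longrightarrow> r x (hd ys))"
  by (cases ys) auto

declare gpath.simps(3)[simp del]

lemma gpath_append: "gpath r (xs @ ys) \<longleftrightarrow> gpath r xs \<and> gpath r ys \<and> set xs \<inter> set ys = {}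
   \<and> (xs \<noteq> [] \<longrightarrow> ys \<noteq> [] \<longrightarrow> r (last xs) (hd ys))"
  by (induction xs) (auto simp: gpath_Cons)

lemma gpath_rev: assumes "\<And>a b. r a b \<longleftrightarrow> r b a" shows "gpath r (rev xs) \<longleftrightarrow> gpath r xs"
  by (induction xs) (auto simp: gpath_append gpath_Cons last_rev assms)

lemma gpath_nth: "gpath r xs \<Longrightarrow> Suc j < length xs \<Longrightarrow> r (xs!j) (xs!Suc j)"
  by (simp add: gpath_iff)




abbreviation Er :: "'a set set \<Rightarrow> 'a \<Rightarrow> 'a \<Rightarrow> bool" where "Er E \<equiv> (\<lambda>a b. {a,b} \<in> E)"

lemma Er_sym: "Er E a b \<longleftrightarrow> Er E b a" by (simp add: insert_commute)

lemma nth_in_take_iff: "distinct xs \<Longrightarrow> j < length xs \<Longrightarrow> xs!j \<in> set (take a xs) \<longleftrightarrow> j < a"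
proof
  assume d: "distinct xs" and j: "j < length xs" and m: "xs!j \<in> set (take a xs)"
  then obtain i where i: "i < length (take a xs)" "take a xs ! i = xs!j" by (auto simp: in_set_conv_nth)
  then have "xs ! i = xs ! j" "i < length xs" "i < a" by auto
  with d j have "i = j" using nth_eq_iff_index_eq by blast
  with i show "j < a" by simp
next
  assume "distinct xs" "j < length xs" "j < a"
  then show "xs!j \<in> set (take a xs)" by (metis in_set_conv_nth length_take min_less_iff_conj nth_take)
qed

locale fsl =
  fixes V :: "'a set" and E s d P F
  assumes fs: "FS_setting V E s d P F"
begin

definition k where "k = length P - 1"

lemma basic: "simple_graph V E" "two_connected V E" "s \<in> V" "d \<in> V" "s \<noteq> d"
  "shortest_path E s d P" "forwarding_subgraph E s d P F" "avoids_single_link_failures F d P"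
  using fs by (auto simp: FS_setting_def)

lemma Pup: "upath E P" and hdP: "hd P = s" and lastP: "last P = d"
  and Pshort: "\<And>Q. upath E Q \<Longrightarrow> hd Q = s \<Longrightarrow> last Q = d \<Longrightarrow> length P \<le> length Q"
  using basic(6) by (auto simp: shortest_path_def)

lemma Pdist: "distinct P" using Pup by (simp add: upath_def)
lemma Pne: "P \<noteq> []" using Pup by (simp add: upath_def)

lemma acyc: "acyclic F" and Fdp: "dpath F P" and arcsE: "\<And>u v. (u,v) \<in> F \<Longrightarrow> {u,v} \<in> E"
  using basic(7) by (auto simp: forwarding_subgraph_def)

lemma lenP: "length P = k + 1" "1 \<le> k"
proof -
  show "length P = k + 1" using Pne by (simp add: k_def)
  show "1 \<le> k"
  proof (rule ccontr)
    assume "\<not> 1 \<le> k"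
    moreover have "length P > 0" using Pne by simp
    ultimately have "length P = 1" unfolding k_def by linarith
    then obtain x where "P = [x]" by (cases P) auto
    then show False using hdP lastP basic(5) by simp
  qed
qed

lemma Pk: "P ! k = d" using lastP Pne by (simp add: last_conv_nth k_def)
lemma P0: "P ! 0 = s" using hdP Pne by (simp add: hd_conv_nth)

lemma Pinj: "i \<le> k \<Longrightarrow> j \<le> k \<Longrightarrow> P!i = P!j \<longleftrightarrow> i = j"
  using Pdist lenP nth_eq_iff_index_eq by fastforce

lemma Pin: "x \<in> set P \<longleftrightarrow> (\<exists>j\<le>k. P!j = x)"
  using lenP by (auto simp: in_set_conv_nth less_Suc_eq_le)

lemma Pnth_in: "j \<le> k \<Longrightarrow> P!j \<in> set P" using lenP by simp

lemma arc_card: "(u,v) \<in> F \<Longrightarrow> u \<noteq> v \<and> u \<in> V \<and> v \<in> V"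
proof -
  assume a: "(u,v) \<in> F"
  then have e: "{u,v} \<in> E" by (rule arcsE)
  then have "card {u,v} = 2" "{u,v} \<subseteq> V" using basic(1) by (auto simp: simple_graph_def)
  then show ?thesis by (cases "u = v") auto
qed

lemma finF: "finite F"
proof -
  have "F \<subseteq> V \<times> V" using arc_card by auto
  moreover have "finite V" using basic(1) by (simp add: simple_graph_def)
  ultimately show ?thesis by (metis finite_cartesian_product finite_subset)
qed

lemma Parc: "i < k \<Longrightarrow> (P!i, P!Suc i) \<in> F"
  using Fdp lenP by (simp add: dpath_def)

lemma Ptrancl: "i < j \<Longrightarrow> j \<le> k \<Longrightarrow> (P!i, P!j) \<in> F\<^sup>+"
proof (induction j)
  case 0 then show ?case by simp
next
  case (Suc j)
  show ?case
  proof (cases "i = j")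
    case True then show ?thesis using Parc Suc by auto
  next
    case False
    then have "(P!i, P!j) \<in> F\<^sup>+" using Suc by auto
    moreover have "(P!j, P!Suc j) \<in> F" using Parc Suc by auto
    ultimately show ?thesis by (rule trancl_into_trancl)
  qed
qed

lemma Prtrancl: "i \<le> j \<Longrightarrow> j \<le> k \<Longrightarrow> (P!i, P!j) \<in> F\<^sup>*"
  using Ptrancl by (cases "i = j") (auto intro: trancl_into_rtrancl)

lemma nocycle: "(a,b) \<in> F\<^sup>+ \<Longrightarrow> (b,a) \<in> F\<^sup>* \<Longrightarrow> False"
  using acyc by (meson acyclic_def trancl_rtrancl_trancl)

lemma SC1:
  assumes ab: "a < b" "b \<le> k" and ys: "set ys \<inter> set P = {}"
    and g: "gpath (Er E) (P!a # ys @ [P!b])"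
  shows "b \<le> a + length ys + 1"
proof -
  let ?M = "P!a # ys @ [P!b]"
  define Q where "Q = take a P @ ?M @ drop (Suc b) P"
  have gP: "gpath (Er E) P" using Pup by (simp add: upath_gpath)
  have dropa: "drop a P = P!a # drop (Suc a) P" using ab lenP by (simp add: Cons_nth_drop_Suc)
  have takeb: "take (Suc b) P = take b P @ [P!b]" using ab lenP by (simp add: take_Suc_conv_app_nth)
  have "gpath (Er E) (take a P @ (P!a # drop (Suc a) P))"
    using gP dropa append_take_drop_id[of a P] by metis
  then have g1: "gpath (Er E) (take a P)" and l1: "take a P \<noteq> [] \<longrightarrow> Er E (last (take a P)) (P!a)"
    by (simp_all only: gpath_append list.sel(1) list.distinct(1)) simp_all
  have "gpath (Er E) ((take b P @ [P!b]) @ drop (Suc b) P)"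
    using gP takeb append_take_drop_id[of "Suc b" P] by metis
  then have g3: "gpath (Er E) (drop (Suc b) P)" and l3: "drop (Suc b) P \<noteq> [] \<longrightarrow> Er E (P!b) (hd (drop (Suc b) P))"
    by (simp_all only: gpath_append last_snoc) simp_all
  have dis1: "set (take a P) \<inter> set (?M @ drop (Suc b) P) = {}"
  proof -
    have "set (take a P) \<inter> set (drop (Suc b) P) = {}"
      using Pdist ab by (intro set_take_disj_set_drop_if_distinct) auto
    moreover have "P!a \<notin> set (take a P)" "P!b \<notin> set (take a P)"
      using nth_in_take_iff[OF Pdist] ab lenP by auto
    moreover have "set (take a P) \<subseteq> set P" by (rule set_take_subset)
    ultimately show ?thesis using ys by auto
  qed
  have dis2: "set ?M \<inter> set (drop (Suc b) P) = {}"
  proof -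
    have "set (take (Suc b) P) \<inter> set (drop (Suc b) P) = {}"
      using Pdist by (intro set_take_disj_set_drop_if_distinct) auto
    moreover have "P!a \<in> set (take (Suc b) P)" "P!b \<in> set (take (Suc b) P)"
      using nth_in_take_iff[OF Pdist] ab lenP by auto
    moreover have "set (drop (Suc b) P) \<subseteq> set P" by (rule set_drop_subset)
    ultimately show ?thesis using ys by auto
  qed
  have "gpath (Er E) (?M @ drop (Suc b) P)"
    using g g3 dis2 l3 by (subst gpath_append) simp
  then have gQ: "gpath (Er E) Q"
    unfolding Q_def using g1 dis1 l1 by (subst gpath_append) auto
  have hQ: "hd Q = s"
    using P0 hdP Pne by (cases a) (auto simp: Q_def hd_take)
  have lQ: "last Q = d"
  proof (cases "b = k")
    case True
    then have "drop (Suc b) P = []" using lenP by simp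
    then show ?thesis using True Pk by (simp add: Q_def)
  next
    case False
    then have "drop (Suc b) P \<noteq> []" using lenP ab by simp
    then show ?thesis using lastP by (simp add: Q_def last_drop)
  qed
  have "upath E Q" using gQ by (simp add: upath_gpath Q_def)
  then have "length P \<le> length Q" using Pshort hQ lQ by blast
  moreover have "length Q = a + length ys + 2 + (k - b)" using lenP ab by (simp add: Q_def)
  ultimately show ?thesis using lenP ab by simp
qed

lemma SC:
  assumes ab: "a \<le> k" "b \<le> k" and ys: "set ys \<inter> set P = {}"
    and g: "gpath (Er E) (P!a # ys @ [P!b])"
  shows "b \<le> a + length ys + 1 \<and> a \<le> b + length ys + 1"
proof -
  have "a \<noteq> b" using g by (auto simp: gpath_Cons)
  then consider "a < b" | "b < a" by linarith
  then show ?thesis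
  proof cases
    case 1 then show ?thesis using SC1 ab ys g by fastforce
  next
    case 2
    have "gpath (Er E) (rev (P!a # ys @ [P!b]))" using g gpath_rev[of "Er E"] Er_sym by metis
    then have "gpath (Er E) (P!b # rev ys @ [P!a])" by simp
    then have "a \<le> b + length (rev ys) + 1" using SC1[of b a "rev ys"] 2 ab ys by simp
    then show ?thesis using 2 by simp
  qed
qed

end



context fsl begin

definition Qf where "Qf i = (SOME Q. dpath F Q \<and> hd Q = P!i \<and> last Q = d \<and> \<not> uses_arc Q (P!i, P!(i+1)))"

lemma Qf: assumes "i < k"
  shows "dpath F (Qf i) \<and> hd (Qf i) = P!i \<and> last (Qf i) = d \<and> \<not> uses_arc (Qf i) (P!i, P!(i+1))"
proof -
  have "\<exists>Q. dpath F Q \<and> hd Q = P!i \<and> last Q = d \<and> \<not> uses_arc Q (P!i, P!(i+1))"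
    using basic(8) assms lenP by (auto simp: avoids_single_link_failures_def)
  then show ?thesis unfolding Qf_def by (rule someI_ex)
qed

lemma dp_arc: "dpath F Q \<Longrightarrow> Suc j < length Q \<Longrightarrow> (Q!j, Q!Suc j) \<in> F"
  by (simp add: dpath_def)

definition w where "w i = Qf i ! 1"
definition xx where "xx i = Qf i ! 2"

lemma Qf0: "i < k \<Longrightarrow> Qf i ! 0 = P!i"
  using Qf[of i] by (metis dpath_def hd_conv_nth)

lemma Qlen2: assumes "i < k" shows "2 \<le> length (Qf i)"
proof (rule ccontr)
  assume "\<not> 2 \<le> length (Qf i)"
  moreover have "Qf i \<noteq> []" using Qf[OF assms] by (simp add: dpath_def)
  moreover have "length (Qf i) \<noteq> 0" using \<open>Qf i \<noteq> []\<close> by simp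
  ultimately have "length (Qf i) = 1" by linarith
  then have "last (Qf i) = Qf i ! 0" using \<open>Qf i \<noteq> []\<close> by (simp add: last_conv_nth)
  then have "P!i = P!k" using Qf[OF assms] Qf0[OF assms] Pk by simp
  then show False using Pinj assms by simp
qed

lemma warc: "i < k \<Longrightarrow> (P!i, w i) \<in> F"
  using dp_arc[of "Qf i" 0] Qf Qlen2 Qf0 unfolding w_def by fastforce

lemma wne: assumes "i < k" shows "w i \<noteq> P!(i+1)"
proof
  assume "w i = P!(i+1)"
  then have "uses_arc (Qf i) (P!i, P!(i+1))"
    unfolding uses_arc_def using Qlen2[OF assms] Qf0[OF assms] w_def
    by (intro exI[of _ 0]) auto
  then show False using Qf[OF assms] by simp
qed

lemma Er_arc: "(u,v) \<in> F \<Longrightarrow> Er E u v" using arcsE by simp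
lemma Er_arc': "(u,v) \<in> F \<Longrightarrow> Er E v u" using arcsE by (simp add: insert_commute)

lemma w_off: assumes i: "i < k" shows "w i \<notin> set P"
proof
  assume "w i \<in> set P"
  then obtain j where j: "j \<le> k" "P!j = w i" using Pin by auto
  have a: "(P!i, P!j) \<in> F" using warc[OF i] j by simp
  have "j \<noteq> i" using arc_card[OF a] by auto
  moreover have "j \<noteq> i + 1" using wne[OF i] j by auto
  moreover have "\<not> j < i"
  proof
    assume "j < i"
    then have "(P!j, P!i) \<in> F\<^sup>+" using Ptrancl i by simp
    then show False using nocycle a by blast
  qed
  moreover have "\<not> j > i + 1"
  proof
    assume ji: "j > i + 1"
    have "gpath (Er E) (P!i # [] @ [P!j])"
      using Er_arc[OF a] Pinj[of i j] i j ji by (auto simp: gpath_Cons)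
    then show False using SC[of i j "[]"] i j ji by simp
  qed
  ultimately show False by linarith
qed

lemma d_in: "d \<in> set P" using Pk Pnth_in by auto

lemma gp3: "Er E a x \<Longrightarrow> Er E x b \<Longrightarrow> a \<in> set P \<Longrightarrow> b \<in> set P \<Longrightarrow> a \<noteq> b \<Longrightarrow> x \<notin> set P
  \<Longrightarrow> gpath (Er E) (a # [x] @ [b])"
  by (auto simp: gpath_Cons)

lemma gp4: "Er E a x \<Longrightarrow> Er E x y \<Longrightarrow> Er E y b \<Longrightarrow> a \<in> set P \<Longrightarrow> b \<in> set P \<Longrightarrow> a \<noteq> b
  \<Longrightarrow> x \<notin> set P \<Longrightarrow> y \<notin> set P \<Longrightarrow> x \<noteq> y
  \<Longrightarrow> gpath (Er E) (a # [x, y] @ [b])"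
  by (auto simp: gpath_Cons)

lemma gp5: "Er E a x \<Longrightarrow> Er E x y \<Longrightarrow> Er E y z \<Longrightarrow> Er E z b \<Longrightarrow> a \<in> set P \<Longrightarrow> b \<in> set P \<Longrightarrow> a \<noteq> b
  \<Longrightarrow> x \<notin> set P \<Longrightarrow> y \<notin> set P \<Longrightarrow> z \<notin> set P \<Longrightarrow> x \<noteq> y \<Longrightarrow> x \<noteq> z \<Longrightarrow> y \<noteq> z
  \<Longrightarrow> gpath (Er E) (a # [x, y, z] @ [b])"
  by (auto simp: gpath_Cons)

definition R where "R = {u. u \<notin> set P \<and> (\<exists>z. (u,z) \<in> F)}"

lemma finR: "finite R"
proof -
  have "R \<subseteq> fst ` F" unfolding R_def by force
  then show ?thesis using finF finite_subset by blast
qed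

lemma Qlen3: assumes "i < k" shows "3 \<le> length (Qf i)"
proof (rule ccontr)
  assume "\<not> 3 \<le> length (Qf i)"
  then have "length (Qf i) = 2" using Qlen2[OF assms] by simp
  moreover have "Qf i \<noteq> []" using Qlen2[OF assms] by auto
  ultimately have "last (Qf i) = w i" by (simp add: last_conv_nth w_def)
  then show False using Qf[OF assms] w_off[OF assms] d_in by simp
qed

lemma w_R: assumes "i < k" shows "w i \<in> R"
proof -
  have "(Qf i ! 1, Qf i ! Suc 1) \<in> F" by (rule dp_arc) (use Qf[OF assms] Qlen3[OF assms] in auto)
  then show ?thesis using w_off[OF assms] unfolding R_def w_def by blast
qed

lemma U2: assumes "i < j" "j < k" "w i = w j" shows "j \<le> i + 2"
proof -
  have e1: "Er E (P!i) (w i)" using Er_arc[OF warc[of i]] assms by simp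
  have e2: "Er E (w i) (P!j)" using Er_arc'[OF warc[of j]] assms by simp
  have "gpath (Er E) (P!i # [w i] @ [P!j])"
    using assms Pinj[of i j] w_off[of i] Pnth_in[of i] Pnth_in[of j] e1 e2
    by (intro gp3) auto
  then show ?thesis using SC[of i j "[w i]"] assms w_off[of i] by simp
qed

definition B0 where "B0 i \<longleftrightarrow> 2 \<le> i \<and> w (i-2) = w i"

lemma x_props: assumes i: "i < k" and b: "B0 i"
  shows "xx i \<notin> set P \<and> (w i, xx i) \<in> F \<and> xx i \<in> R"
proof -
  have l3: "3 \<le> length (Qf i)" by (rule Qlen3[OF i])
  have "(Qf i ! 1, Qf i ! Suc 1) \<in> F" by (rule dp_arc) (use Qf[OF i] l3 in auto)
  then have a: "(w i, xx i) \<in> F" unfolding w_def xx_def by (simp add: numeral_2_eq_2)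
  have i2: "2 \<le> i" "w (i-2) = w i" using b by (auto simp: B0_def)
  have off: "xx i \<notin> set P"
  proof
    assume "xx i \<in> set P"
    then obtain j where j: "j \<le> k" "P!j = xx i" using Pin by auto
    show False
    proof (cases "j \<le> i")
      case True
      have "(P!i, P!j) \<in> F\<^sup>+" using warc[OF i] a j by auto
      moreover have "(P!j, P!i) \<in> F\<^sup>*" using Prtrancl True i by simp
      ultimately show False by (rule nocycle)
    next
      case False
      have ik2: "i - 2 \<le> k" "i - 2 < k" using i by linarith+
      have e1: "Er E (P!(i-2)) (w i)" using Er_arc[OF warc[OF ik2(2)]] i2 by simp
      have e2: "Er E (w i) (P!j)" using Er_arc[OF a] j by simp
      have "P!(i-2) \<noteq> P!j" using Pinj[OF ik2(1) j(1)] False by simp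
      then have "gpath (Er E) (P!(i-2) # [w i] @ [P!j])"
        using e1 e2 w_off[OF i] Pnth_in[OF ik2(1)] Pnth_in[OF j(1)]
        by (intro gp3) auto
      then have "j \<le> i - 2 + 2" using SC[of "i-2" j "[w i]"] i j w_off[OF i] by simp
      then show False using False i2 by simp
    qed
  qed
  have "xx i \<noteq> d" using off d_in by auto
  have "length (Qf i) \<noteq> 3"
  proof
    assume "length (Qf i) = 3"
    moreover have "Qf i \<noteq> []" using l3 by auto
    ultimately have "last (Qf i) = xx i" by (simp add: last_conv_nth xx_def)
    then show False using Qf[OF i] \<open>xx i \<noteq> d\<close> by simp
  qed
  then have "Suc 2 < length (Qf i)" using l3 by simp
  then have "(Qf i ! 2, Qf i ! Suc 2) \<in> F" using Qf[OF i] by (intro dp_arc) auto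
  then show ?thesis using off a unfolding R_def xx_def by blast
qed

lemma LBw: assumes i: "i < k" "B0 i" and j: "j < k" "w j = xx i"
  shows "j + 3 = i \<or> j + 1 = i \<or> j = i + 1"
proof -
  let ?y = "xx i"
  have xp: "?y \<notin> set P" "(w i, ?y) \<in> F" using x_props[OF i] by auto
  have i2: "2 \<le> i" "w (i-2) = w i" using i by (auto simp: B0_def)
  have wy: "w i \<noteq> ?y" using arc_card[OF xp(2)] by simp
  have jne: "j \<noteq> i" "j \<noteq> i - 2" using wy j i2 by auto
  have e1: "Er E (P!(i-2)) (w i)" using Er_arc[OF warc[of "i-2"]] i i2 by simp
  have e2: "Er E (w i) ?y" using Er_arc[OF xp(2)] .
  have e3: "Er E ?y (P!j)" using Er_arc'[OF warc[OF j(1)]] j by simp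
  have e4: "Er E (P!i) (w i)" using Er_arc[OF warc[OF i(1)]] .
  have woff: "w i \<notin> set P" by (rule w_off[OF i(1)])
  have "gpath (Er E) (P!(i-2) # [w i, ?y] @ [P!j])"
    using e1 e2 e3 wy woff xp(1) Pinj[of "i-2" j] jne i j Pnth_in[of "i-2"] Pnth_in[of j]
    by (intro gp4) auto
  moreover have ik2: "i - 2 \<le> k" using i by linarith
  ultimately have h1: "j \<le> i - 2 + 3" using SC[OF ik2 _ _ \<open>gpath (Er E) (P!(i-2) # [w i, ?y] @ [P!j])\<close>] j woff xp(1) by simp
  have "gpath (Er E) (P!i # [w i, ?y] @ [P!j])"
    using e4 e2 e3 wy woff xp(1) Pinj[of i j] jne i j Pnth_in[of i] Pnth_in[of j]
    by (intro gp4) auto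
  then have h2: "i \<le> j + 3" using SC[of i j "[w i, ?y]"] i j woff xp(1) by simp
  show ?thesis using h1 h2 jne i2 by linarith
qed

lemma LBB: assumes ij: "i < j" "j < k" and b: "B0 i" "B0 j" and x: "xx i = xx j"
  shows "j = i + 1"
proof -
  let ?y = "xx i"
  have i: "i < k" using ij by simp
  have xpi: "?y \<notin> set P" "(w i, ?y) \<in> F" using x_props[OF i b(1)] by auto
  have xpj: "(w j, ?y) \<in> F" using x_props[OF ij(2) b(2)] x by auto
  have i2: "2 \<le> i" "w (i-2) = w i" using b by (auto simp: B0_def)
  have j2: "2 \<le> j" "w (j-2) = w j" using b by (auto simp: B0_def)
  have wij: "w i \<noteq> w j"
  proof
    assume "w i = w j"
    then have "j \<le> i - 2 + 2" using U2[of "i-2" j] ij i2 by simp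
    then show False using ij i2 by simp
  qed
  have wy: "w i \<noteq> ?y" "w j \<noteq> ?y" using arc_card[OF xpi(2)] arc_card[OF xpj] by auto
  have "gpath (Er E) (P!(i-2) # [w i, ?y, w j] @ [P!j])"
    using Er_arc[OF warc[of "i-2"]] i2 Er_arc[OF xpi(2)] Er_arc'[OF xpj] Er_arc'[OF warc[OF ij(2)]]
      wij wy w_off[OF i] w_off[OF ij(2)] xpi(1) Pinj[of "i-2" j] ij Pnth_in[of "i-2"] Pnth_in[of j]
    by (intro gp5) auto
  moreover have ik2: "i - 2 \<le> k" using i by linarith
  ultimately have "j \<le> i - 2 + 4" using SC[OF ik2 _ _ \<open>gpath (Er E) (P!(i-2) # [w i, ?y, w j] @ [P!j])\<close>] ij w_off[OF i] w_off[OF ij(2)] xpi(1) by simp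
  moreover have "j \<noteq> i + 2" using wij i2 j2 by auto
  ultimately show ?thesis using ij i2 by linarith
qed

definition g where "g i = (if B0 i then xx i else w i)"

lemma g_R: "i < k \<Longrightarrow> g i \<in> R"
  using x_props w_R unfolding g_def by auto

lemma pair: assumes pq: "p < q" "q < k" and gg: "g p = g q"
  shows "q = p + 1 \<or> (\<not> B0 p \<and> B0 q \<and> q = p + 3)"
proof -
  have p: "p < k" using pq by simp
  consider "\<not> B0 p" "\<not> B0 q" | "B0 p" "B0 q" | "B0 p" "\<not> B0 q" | "\<not> B0 p" "B0 q" by blast
  then show ?thesis
  proof cases
    case 1
    then have "w p = w q" using gg by (simp add: g_def)
    then have "q \<le> p + 2" using U2 pq by simp
    moreover have "q \<noteq> p + 2" using 1 \<open>w p = w q\<close> by (auto simp: B0_def)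
    ultimately show ?thesis using pq by linarith
  next
    case 2 then show ?thesis using LBB pq gg by (simp add: g_def)
  next
    case 3
    then have "w q = xx p" using gg by (simp add: g_def)
    then show ?thesis using LBw[OF p 3(1) pq(2)] pq by linarith
  next
    case 4
    then have "w p = xx q" using gg by (simp add: g_def)
    then show ?thesis using LBw[OF pq(2) 4(2) p] pq 4 by auto
  qed
qed

lemma no_three: assumes "a < b" "b < c" "c < k" "g a = g b" "g b = g c" shows False
proof -
  have gac: "g a = g c" using assms by simp
  have ac: "c = a + 1 \<or> (\<not> B0 a \<and> B0 c \<and> c = a + 3)" using pair[of a c] assms gac less_trans by blast
  have ab: "b = a + 1 \<or> (\<not> B0 a \<and> B0 b \<and> b = a + 3)" using pair[of a b] assms less_trans by blast
  have bc: "c = b + 1 \<or> (\<not> B0 b \<and> B0 c \<and> c = b + 3)" using pair[of b c] assms by blast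
  have "c = a + 1 \<or> c = a + 3" "b = a + 1 \<or> b = a + 3" "c = b + 1 \<or> c = b + 3"
    using ac ab bc by blast+
  then show False using assms(1,2) by linarith
qed

lemma card_le2: assumes "finite A" "\<And>a b c. a \<in> A \<Longrightarrow> b \<in> A \<Longrightarrow> c \<in> A \<Longrightarrow> a < (b::nat) \<Longrightarrow> b < c \<Longrightarrow> False"
  shows "card A \<le> 2"
proof (rule ccontr)
  assume "\<not> card A \<le> 2"
  then have "Suc (Suc (Suc 0)) \<le> card A" by simp
  then obtain a b c where abc: "a \<in> A" "b \<in> A" "c \<in> A" "a \<noteq> b" "a \<noteq> c" "b \<noteq> c"
    by (auto simp: card_le_Suc_iff)
  then show False using assms(2) by (metis linorder_neqE_nat)
qed

lemma fiber: "card {i \<in> {..<k}. g i = y} \<le> 2"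
  by (rule card_le2) (auto intro: no_three)

lemma kR: "k \<le> 2 * card R"
proof -
  have "{..<k} = (\<Union>y\<in>R. {i \<in> {..<k}. g i = y})" using g_R by auto
  then have "card {..<k} \<le> (\<Sum>y\<in>R. card {i \<in> {..<k}. g i = y})"
    using card_UN_le[OF finR] by metis
  also have "\<dots> \<le> (\<Sum>y\<in>R. 2)" by (rule sum_mono) (rule fiber)
  finally show ?thesis by simp
qed

lemma cardF: "2 * k + card R \<le> card F"
proof -
  define F1 where "F1 = (\<lambda>i. (P!i, P!Suc i)) ` {..<k}"
  define F2 where "F2 = (\<lambda>i. (P!i, w i)) ` {..<k}"
  define F3 where "F3 = {a \<in> F. fst a \<notin> set P}"
  have c1: "card F1 = k" unfolding F1_def
    by (subst card_image) (auto simp: inj_on_def Pinj)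
  have c2: "card F2 = k" unfolding F2_def
    by (subst card_image) (auto simp: inj_on_def Pinj)
  have "R \<subseteq> fst ` F3" unfolding R_def F3_def by force
  have finF3: "finite F3" unfolding F3_def using finF by simp
  have "card R \<le> card (fst ` F3)" using \<open>R \<subseteq> fst ` F3\<close> finF3 by (intro card_mono) auto
  also have "\<dots> \<le> card F3" using finF3 by (rule card_image_le)
  finally have c3: "card R \<le> card F3" .
  have sub: "F1 \<union> F2 \<union> F3 \<subseteq> F" unfolding F1_def F2_def F3_def using Parc warc by auto
  have d12: "F1 \<inter> F2 = {}" unfolding F1_def F2_def
    using w_off Pnth_in by (auto simp: Pinj) (metis Suc_leI)
  have d3: "(F1 \<union> F2) \<inter> F3 = {}" unfolding F1_def F2_def F3_def using Pnth_in by auto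
  have fin: "finite F1" "finite F2" "finite F3" using finF sub by (auto intro: finite_subset)
  have "card (F1 \<union> F2 \<union> F3) = k + k + card F3"
    using c1 c2 d12 d3 fin by (simp add: card_Un_disjoint)
  moreover have "card (F1 \<union> F2 \<union> F3) \<le> card F" using sub finF by (rule card_mono[rotated])
  ultimately show ?thesis using c3 by linarith
qed

lemma main_lb: "real_of_int \<lceil>5 * real (length P - 1) / 2\<rceil> \<le> real (card F)"
proof -
  have "5 * k \<le> 2 * card F" using cardF kR by linarith
  then have "5 * real k / 2 \<le> real (card F)" by linarith
  then have "\<lceil>5 * real k / 2\<rceil> \<le> int (card F)" by (simp add: ceiling_le_iff)
  then show ?thesis unfolding k_def by linarith
qed

end



definition lev :: "nat \<Rightarrow> nat" where
  "lev n = (if n mod 3 = 2 then 2 * (n div 3) + 1 else n div 3)"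

definition vv :: "nat \<Rightarrow> nat" where "vv a = 3*a"
definition tw :: "nat \<Rightarrow> nat" where "tw a = 3*a+1"
definition uu :: "nat \<Rightarrow> nat" where "uu a = 3*a+2"

lemma m_vv[simp]: "vv a mod 3 = 0" "vv a div 3 = a" by (simp_all add: vv_def)
lemma m_tw[simp]: "tw a mod 3 = 1" "tw a div 3 = a" by (simp_all add: tw_def mod_Suc)
lemma m_uu[simp]: "uu a mod 3 = 2" "uu a div 3 = a" by (simp_all add: uu_def mod_Suc)

lemma lev_simps[simp]: "lev (vv a) = a" "lev (tw a) = a" "lev (uu a) = 2*a+1"
  by (simp_all add: lev_def)

lemma vv_inj[simp]: "vv a = vv b \<longleftrightarrow> a = b" by (simp add: vv_def)
lemma tw_inj[simp]: "tw a = tw b \<longleftrightarrow> a = b" by (simp add: tw_def)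
lemma uu_inj[simp]: "uu a = uu b \<longleftrightarrow> a = b" by (simp add: uu_def)
lemma dist_vert[simp]: "vv a \<noteq> tw b" "tw b \<noteq> vv a" "vv a \<noteq> uu b" "uu b \<noteq> vv a" "tw a \<noteq> uu b" "uu b \<noteq> tw a"
  by (metis m_vv(1) m_tw(1) m_uu(1) zero_neq_one numeral_One num.distinct(1) numeral_eq_iff zero_neq_numeral)+

lemma lev_cases: "n mod 3 \<noteq> 2 \<Longrightarrow> n = vv (lev n) \<or> n = tw (lev n)"
  unfolding lev_def vv_def tw_def by (auto, presburger)

definition VV :: "nat \<Rightarrow> nat set" where "VV k = {n. lev n \<le> k}"
definition EE :: "nat \<Rightarrow> nat set set" where
  "EE k = {{x,y} | x y. lev x \<le> k \<and> lev y \<le> k \<and> x \<noteq> y \<and> lev x \<le> lev y + 1 \<and> lev y \<le> lev x + 1}"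
definition PP :: "nat \<Rightarrow> nat list" where "PP k = map vv [0..<Suc k]"
definition F1 :: "nat \<Rightarrow> (nat \<times> nat) set" where "F1 k = (\<lambda>a. (vv a, vv (Suc a))) ` {..<k}"
definition F2 :: "nat \<Rightarrow> (nat \<times> nat) set" where "F2 k = (\<lambda>i. (vv i, uu (i div 2))) ` {..<k}"
definition F3 :: "nat \<Rightarrow> (nat \<times> nat) set" where "F3 k = (\<lambda>j. (uu j, vv (min (2*j+2) k))) ` {j. 2*j+1 \<le> k}"
definition FF :: "nat \<Rightarrow> (nat \<times> nat) set" where "FF k = F1 k \<union> F2 k \<union> F3 k"

lemma EE_iff: "{x,y} \<in> EE k \<longleftrightarrow> lev x \<le> k \<and> lev y \<le> k \<and> x \<noteq> y \<and> lev x \<le> lev y + 1 \<and> lev y \<le> lev x + 1"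
proof
  assume "{x,y} \<in> EE k"
  then obtain a b where ab: "{x,y} = {a,b}" "lev a \<le> k \<and> lev b \<le> k \<and> a \<noteq> b \<and> lev a \<le> lev b + 1 \<and> lev b \<le> lev a + 1"
    unfolding EE_def by blast
  then have "(x = a \<and> y = b) \<or> (x = b \<and> y = a)" by (metis doubleton_eq_iff)
  then show "lev x \<le> k \<and> lev y \<le> k \<and> x \<noteq> y \<and> lev x \<le> lev y + 1 \<and> lev y \<le> lev x + 1" using ab by auto
qed (auto simp: EE_def)

lemma EE_sub: "e \<in> EE k \<Longrightarrow> e \<subseteq> VV k \<and> card e = 2"
  unfolding EE_def VV_def by auto

lemma FF_cases: assumes "(a,b) \<in> FF k"
  obtains (1) i where "i < k" "a = vv i" "b = vv (Suc i)"
    | (2) i where "i < k" "a = vv i" "b = uu (i div 2)"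
    | (3) j where "2*j+1 \<le> k" "a = uu j" "b = vv (min (2*j+2) k)"
  using assms unfolding FF_def F1_def F2_def F3_def by auto

lemma FF_E: assumes "(a,b) \<in> FF k" shows "{a,b} \<in> EE k"
  using assms
proof (cases rule: FF_cases)
  case (1 i) then show ?thesis by (simp add: EE_iff)
next
  case (2 i)
  have "i \<le> 2*(i div 2)+1 \<and> 2*(i div 2)+1 \<le> i + 1" by linarith
  moreover have "2*(i div 2)+1 \<le> k" using 2 by linarith
  ultimately show ?thesis using 2 by (simp add: EE_iff)
next
  case (3 j) then show ?thesis by (simp add: EE_iff)
qed

definition hh :: "nat \<Rightarrow> nat \<Rightarrow> nat" where
  "hh k n = (if n mod 3 = 2 then min (4*(n div 3)+3) (2*k-1) else 2*(n div 3))"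

lemma FF_h: assumes "(a,b) \<in> FF k" shows "hh k a < hh k b"
  using assms
proof (cases rule: FF_cases)
  case (1 i) then show ?thesis by (simp add: hh_def)
next
  case (2 i)
  have "2*i < 4*(i div 2)+3" by linarith
  then show ?thesis using 2 by (simp add: hh_def)
next
  case (3 j)
  show ?thesis
  proof (cases "2*j+2 \<le> k")
    case True
    then have "hh k b = 4*j+4" using 3 by (simp add: hh_def)
    moreover have "hh k a \<le> 4*j+3" using 3 by (simp add: hh_def)
    ultimately show ?thesis by simp
  next
    case False
    then have kk: "k = 2*j+1" using 3 by linarith
    then have "hh k b = 4*j+2" using 3 by (simp add: hh_def)
    moreover have "hh k a = 4*j+1" using 3 kk by (simp add: hh_def)
    ultimately show ?thesis by simp
  qed
qed

lemma FF_acyclic: "acyclic (FF k)"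
proof -
  have "(a,b) \<in> (FF k)\<^sup>+ \<Longrightarrow> hh k a < hh k b" for a b
    by (induction rule: trancl_induct) (auto dest: FF_h)
  then show ?thesis unfolding acyclic_def by blast
qed




lemma walk_upath:
  assumes W: "\<forall>e\<in>Ed. e \<subseteq> W" and u: "u \<in> W" and r: "(u,v) \<in> {(a,b). {a,b} \<in> Ed}\<^sup>*"
  shows "\<exists>xs. set xs \<subseteq> W \<and> upath Ed xs \<and> hd xs = u \<and> last xs = v"
  using r
proof (induction rule: rtrancl_induct)
  case base
  then show ?case using u by (intro exI[of _ "[u]"]) (simp add: upath_gpath)
next
  case (step y z)
  then obtain xs where xs: "set xs \<subseteq> W" "upath Ed xs" "hd xs = u" "last xs = y" by blast
  have yz: "{y,z} \<in> Ed" using step by simp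
  then have zW: "z \<in> W" using W by auto
  have g: "gpath (\<lambda>a b. {a,b} \<in> Ed) xs" "xs \<noteq> []" using xs by (auto simp: upath_gpath)
  show ?case
  proof (cases "z \<in> set xs")
    case True
    then obtain i where i: "i < length xs" "xs!i = z" by (auto simp: in_set_conv_nth)
    define ys where "ys = take (Suc i) xs"
    have "gpath (\<lambda>a b. {a,b} \<in> Ed) (ys @ drop (Suc i) xs)" using g by (simp add: ys_def)
    then have gy: "gpath (\<lambda>a b. {a,b} \<in> Ed) ys" by (simp only: gpath_append)
    have "ys \<noteq> []" "hd ys = u" using i xs(3) g(2) by (auto simp: ys_def hd_take)
    moreover have "last ys = z" using i by (simp add: ys_def take_Suc_conv_app_nth)
    moreover have "set ys \<subseteq> set xs" unfolding ys_def by (rule set_take_subset)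
    ultimately show ?thesis using gy xs(1) unfolding upath_gpath by blast
  next
    case False
    have "gpath (\<lambda>a b. {a,b} \<in> Ed) (xs @ [z])" using g False yz xs(4) by (simp add: gpath_append)
    moreover have "set (xs @ [z]) \<subseteq> W" using xs(1) zW by simp
    moreover have "hd (xs @ [z]) = u" using xs(3) g(2) by simp
    ultimately show ?thesis unfolding upath_gpath by (metis last_snoc snoc_eq_iff_butlast)
  qed
qed
lemma conn_VV: "graph_connected (VV k - {x}) {e \<in> EE k. x \<notin> e}"
proof -
  define W where "W = VV k - {x}"
  define Ed where "Ed = {e \<in> EE k. x \<notin> e}"
  define Rl where "Rl = {(a,b). {a,b} \<in> Ed}"
  have WE: "\<forall>e\<in>Ed. e \<subseteq> W" unfolding Ed_def W_def using EE_sub by auto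
  have edge: "(a,b) \<in> Rl" if "a \<in> W" "b \<in> W" "a \<noteq> b" "lev a \<le> lev b + 1" "lev b \<le> lev a + 1" for a b
    using that unfolding Rl_def Ed_def W_def VV_def by (simp add: EE_iff)
  define c0 where "c0 = (if x = vv 0 then tw 0 else vv 0)"
  have c0W: "c0 \<in> W" unfolding c0_def W_def VV_def by auto
  have reach: "\<forall>y\<in>W. lev y = l \<longrightarrow> (c0, y) \<in> Rl\<^sup>*" for l
  proof (induction l)
    case 0
    show ?case
    proof (intro ballI impI)
      fix y assume y: "y \<in> W" "lev y = 0"
      have "y mod 3 \<noteq> 2" using y(2) by (auto simp: lev_def)
      then have "y = vv 0 \<or> y = tw 0" using lev_cases[of y] y(2) by simp
      show "(c0, y) \<in> Rl\<^sup>*"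
      proof (cases "y = c0")
        case True then show ?thesis by simp
      next
        case False
        have "lev c0 = 0" by (simp add: c0_def)
        then have "(c0, y) \<in> Rl" using edge[OF c0W y(1) False[symmetric]] y(2) by simp
        then show ?thesis by simp
      qed
    qed
  next
    case (Suc l)
    show ?case
    proof (intro ballI impI)
      fix y assume y: "y \<in> W" "lev y = Suc l"
      define z where "z = (if x = vv l then tw l else vv l)"
      have "lev y \<le> k" using y unfolding W_def VV_def by simp
      then have zW: "z \<in> W" using y unfolding z_def W_def VV_def by auto
      have lz: "lev z = l" by (simp add: z_def)
      then have "(c0, z) \<in> Rl\<^sup>*" using Suc.IH zW by blast
      moreover have "z \<noteq> y" using lz y(2) by auto
      then have "(z, y) \<in> Rl" using edge[OF zW y(1)] lz y(2) by auto
      ultimately show "(c0, y) \<in> Rl\<^sup>*" by simp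
    qed
  qed
  have symR: "Rl\<inverse> = Rl" unfolding Rl_def by (auto simp: insert_commute)
  show ?thesis unfolding graph_connected_def
  proof (intro conjI ballI)
    show "VV k - {x} \<noteq> {}" using c0W W_def by auto
    fix u v assume uv: "u \<in> VV k - {x}" "v \<in> VV k - {x}"
    have "(c0, u) \<in> Rl\<^sup>*" "(c0, v) \<in> Rl\<^sup>*" using reach uv W_def by auto
    then have "(u, c0) \<in> (Rl\<inverse>)\<^sup>*" by (simp add: rtrancl_converseI)
    then have "(u, v) \<in> Rl\<^sup>*" using symR \<open>(c0, v) \<in> Rl\<^sup>*\<close> by simp
    then show "\<exists>xs. set xs \<subseteq> VV k - {x} \<and> upath {e \<in> EE k. x \<notin> e} xs \<and> hd xs = u \<and> last xs = v"
      using walk_upath[OF WE, of u v] uv unfolding W_def Ed_def Rl_def by simp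
  qed
qed




lemma lev_ge: "n div 3 \<le> lev n" by (simp add: lev_def)

lemma finVV: "finite (VV k)"
proof -
  have "VV k \<subseteq> {..<3*k+3}"
  proof
    fix n assume "n \<in> VV k"
    then have "n div 3 \<le> k" using lev_ge[of n] unfolding VV_def by simp
    then show "n \<in> {..<3*k+3}" by auto
  qed
  then show ?thesis using finite_subset by blast
qed

lemma PP_nth: "i \<le> k \<Longrightarrow> PP k ! i = vv i"
  unfolding PP_def by (simp del: upt_Suc add: nth_map_upt) 

lemma PP_len: "length (PP k) = Suc k" by (simp add: PP_def)

lemma PP_hd: "hd (PP k) = vv 0" by (simp add: PP_def hd_map del: upt_Suc)
lemma PP_last: "last (PP k) = vv k" by (simp add: PP_def last_map del: upt_Suc)

lemma dist_map_vv: "distinct (map vv xs) \<longleftrightarrow> distinct xs"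
  by (simp add: distinct_map inj_on_def)

lemma lev_walk: assumes "upath (EE k) Q" shows "i < length Q \<Longrightarrow> lev (Q!i) \<le> lev (Q!0) + i"
proof (induction i)
  case 0 then show ?case by simp
next
  case (Suc i)
  have "{Q!i, Q!Suc i} \<in> EE k" using assms Suc.prems by (simp add: upath_def)
  then have "lev (Q!Suc i) \<le> lev (Q!i) + 1" by (simp add: EE_iff)
  then show ?case using Suc by simp
qed

lemma tail_gpath: "gpath (\<lambda>a b. (a,b) \<in> FF k) (map vv [t..<Suc k])"
proof -
  have "(vv (t+j), vv (Suc (t+j))) \<in> FF k" if "j < length [t..<Suc k] - 1" for j
  proof -
    have "t + j < k" using that by (simp only: length_upt)
    then show ?thesis unfolding FF_def F1_def by blast
  qed
  then show ?thesis unfolding gpath_iff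
    by (auto simp: dist_map_vv simp del: upt_Suc)
qed

lemma exist: assumes k1: "1 \<le> k"
  shows "FS_setting (VV k) (EE k) (vv 0) (vv k) (PP k) (FF k)"
proof -
  have sg: "simple_graph (VV k) (EE k)" unfolding simple_graph_def using finVV EE_sub by blast
  have c3: "3 \<le> card (VV k)"
  proof -
    have "{vv 0, tw 0, vv 1} \<subseteq> VV k" using k1 unfolding VV_def by auto
    then have "card {vv 0, tw 0, vv 1} \<le> card (VV k)" using finVV by (rule card_mono[rotated])
    moreover have "card {vv 0, tw 0, vv 1} = 3" by simp
    ultimately show ?thesis by simp
  qed
  have e1: "VV k - {vv (Suc k)} = VV k" unfolding VV_def by auto
  have e2: "{e \<in> EE k. vv (Suc k) \<notin> e} = EE k" using EE_sub unfolding VV_def by fastforce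
  have tc: "two_connected (VV k) (EE k)"
    unfolding two_connected_def using c3 conn_VV[of k "vv (Suc k)"] conn_VV e1 e2 by simp
  have gP: "gpath (Er (EE k)) (PP k)"
  proof -
    have "{PP k ! i, PP k ! (i+1)} \<in> EE k" if "i < length (PP k) - 1" for i
      using that by (simp add: PP_len PP_nth EE_iff)
    then show ?thesis unfolding gpath_iff by (simp add: PP_def dist_map_vv del: upt_Suc)
  qed
  have Pne: "PP k \<noteq> []" by (simp add: PP_def)
  have sp: "shortest_path (EE k) (vv 0) (vv k) (PP k)"
    unfolding shortest_path_def
  proof (intro conjI allI impI)
    show "upath (EE k) (PP k)" using gP Pne by (simp add: upath_gpath)
    show "hd (PP k) = vv 0" by (rule PP_hd)
    show "last (PP k) = vv k" by (rule PP_last)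
    fix Q assume Q: "upath (EE k) Q \<and> hd Q = vv 0 \<and> last Q = vv k"
    then have Qne: "Q \<noteq> []" by (simp add: upath_def)
    have "lev (Q ! (length Q - 1)) \<le> lev (Q!0) + (length Q - 1)"
      using lev_walk[of k Q] Q Qne by simp
    moreover have "Q ! (length Q - 1) = vv k" using Q Qne by (simp add: last_conv_nth)
    moreover have "Q ! 0 = vv 0" using Q Qne by (simp add: hd_conv_nth)
    ultimately have "k \<le> length Q - 1" by simp
    moreover have "0 < length Q" using Qne by simp
    ultimately show "length (PP k) \<le> length Q" unfolding PP_len by linarith
  qed
  have dP: "dpath (FF k) (PP k)"
  proof -
    have "(PP k ! i, PP k ! (i+1)) \<in> FF k" if "i < length (PP k) - 1" for i
      using that by (auto simp: PP_len PP_nth FF_def F1_def)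
    then show ?thesis unfolding dpath_def using Pne by (simp add: PP_def dist_map_vv del: upt_Suc)
  qed
  have fsub: "forwarding_subgraph (EE k) (vv 0) (vv k) (PP k) (FF k)"
    unfolding forwarding_subgraph_def using FF_E FF_acyclic Pne PP_hd PP_last dP by auto
  have av: "avoids_single_link_failures (FF k) (vv k) (PP k)"
    unfolding avoids_single_link_failures_def
  proof (intro allI impI)
    fix i assume "i < length (PP k) - 1"
    then have i: "i < k" by (simp add: PP_len)
    define j where "j = i div 2"
    define t where "t = min (2*j+2) k"
    define T where "T = map vv [t..<Suc k]"
    define Q where "Q = vv i # uu j # T"
    have ti: "i < t" "t \<le> k" unfolding t_def j_def using i by linarith+
    have Tne: "T \<noteq> []" "hd T = vv t" "last T = vv k" using ti
      by (simp_all add: T_def hd_map last_map del: upt_Suc)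
    have gT: "gpath (\<lambda>a b. (a,b) \<in> FF k) T" unfolding T_def by (rule tail_gpath)
    have a1: "(vv i, uu j) \<in> FF k" using i unfolding FF_def F2_def j_def by blast
    have "2*j+1 \<le> k" using i unfolding j_def by linarith
    then have a2: "(uu j, vv t) \<in> FF k" unfolding FF_def F3_def t_def by blast
    have uT: "uu j \<notin> set T" unfolding T_def by auto
    have vT: "vv i \<notin> set T" unfolding T_def using ti by auto
    have gQ: "gpath (\<lambda>a b. (a,b) \<in> FF k) Q"
      unfolding Q_def using gT Tne a1 a2 uT vT by (simp add: gpath_Cons)
    have dQ: "dpath (FF k) Q" using gQ by (simp add: dpath_gpath Q_def)
    have nu: "\<not> uses_arc Q (PP k ! i, PP k ! (i + 1))"
    proof
      assume "uses_arc Q (PP k ! i, PP k ! (i + 1))"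
      then obtain m where m: "m < length Q - 1" "Q!m = vv i" "Q!(m+1) = vv (i+1)"
        using i by (auto simp: uses_arc_def PP_nth)
      have dq: "distinct Q" using dQ by (simp add: dpath_def)
      have "Q!m = Q!0" using m by (simp add: Q_def)
      moreover have "m < length Q" "0 < length Q" using m(1) by auto
      ultimately have "m = 0" using nth_eq_iff_index_eq[OF dq, of m 0] by simp
      then show False using m by (simp add: Q_def)
    qed
    show "\<exists>Q. dpath (FF k) Q \<and> hd Q = PP k ! i \<and> last Q = vv k \<and> \<not> uses_arc Q (PP k ! i, PP k ! (i + 1))"
      using dQ nu Tne i by (intro exI[of _ Q]) (simp add: Q_def PP_nth)
  qed
  have "vv 0 \<in> VV k" "vv k \<in> VV k" by (simp_all add: VV_def)
  moreover have "vv 0 \<noteq> vv k" using k1 by simp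
  ultimately show ?thesis unfolding FS_setting_def
    using sg tc sp fsub av by blast
qed

lemma card_FF: "card (FF k) = 2*k + (k+1) div 2"
proof -
  have c1: "card (F1 k) = k" unfolding F1_def by (subst card_image) (auto simp: inj_on_def)
  have c2: "card (F2 k) = k" unfolding F2_def by (subst card_image) (auto simp: inj_on_def)
  have s3: "{j. 2*j+1 \<le> k} = {..<(k+1) div 2}" by auto
  have c3: "card (F3 k) = (k+1) div 2" unfolding F3_def s3 by (subst card_image) (auto simp: inj_on_def)
  have d12: "F1 k \<inter> F2 k = {}" unfolding F1_def F2_def by auto
  have d3: "(F1 k \<union> F2 k) \<inter> F3 k = {}" unfolding F1_def F2_def F3_def by auto
  have fin: "finite (F1 k)" "finite (F2 k)" "finite (F3 k)" unfolding F1_def F2_def F3_def s3 by auto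
  show ?thesis unfolding FF_def using c1 c2 c3 d12 d3 fin by (simp add: card_Un_disjoint)
qed

lemma ceil_eq: "real_of_int \<lceil>5 * real k / 2\<rceil> = real (2*k + (k+1) div 2)"
proof -
  have "\<exists>m. k = 2*m \<or> k = 2*m+1" by presburger
  then obtain m where m: "k = 2*m \<or> k = 2*m+1" by blast
  then show ?thesis
  proof
    assume km: "k = 2*m"
    then have "(k+1) div 2 = m" by simp
    moreover have "5 * real k / 2 = real (5*m)" using km by simp
    ultimately show ?thesis using km by simp
  next
    assume km: "k = 2*m+1"
    then have "(k+1) div 2 = m + 1" by simp
    moreover have "\<lceil>5 * real k / 2\<rceil> = int (5*m+3)"
      by (rule ceiling_unique) (simp_all add: km)
    ultimately show ?thesis using km by simp
  qed
qed


theorem theorem2: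
  shows "(\<forall>(V :: 'a set) E s d P F. FS_setting V E s d P F \<longrightarrow>
            real (card F) \<ge> real_of_int \<lceil>5 * real (length P - 1) / 2\<rceil>)
       \<and> (\<forall>k :: nat. k \<ge> 1 \<longrightarrow>
            (\<exists>(V :: nat set) E s d P F. FS_setting V E s d P F \<and> length P - 1 = k \<and>
               real (card F) = real_of_int \<lceil>5 * real (length P - 1) / 2\<rceil>))"
proof (intro conjI allI impI)
  fix V :: "'a set" and E s d P F
  assume "FS_setting V E s d P F"
  then interpret fsl V E s d P F by unfold_locales
  show "real (card F) \<ge> real_of_int \<lceil>5 * real (length P - 1) / 2\<rceil>" by (rule main_lb)
next
  fix k :: nat
  assume k1: "k \<ge> 1"
  have l: "length (PP k) - 1 = k" by (simp add: PP_len)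
  have c: "real (card (FF k)) = real_of_int \<lceil>5 * real (length (PP k) - 1) / 2\<rceil>"
    unfolding l card_FF ceil_eq ..
  show "\<exists>(V :: nat set) E s d P F. FS_setting V E s d P F \<and> length P - 1 = k \<and>
               real (card F) = real_of_int \<lceil>5 * real (length P - 1) / 2\<rceil>"
    using exist[OF k1] l c by blast
qed

end
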